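(* Let $\lambda=(\lambda_1,\dots,\lambda_k)$ be a partition with Ferrers diagram $\Phi_\lambda$. Then the number of edges of the Hasse diagram of $\mathcal{Y}_\lambda$ is $$\ell(\mathcal{Y}_\lambda)=\sum_{(i,j)\in\Phi_\lambda}\big|\mathcal{Y}_{\lambda^{\swarrow}_{ij}}\big|\cdot\big|\mathcal{Y}_{\lambda^{\nearrow}_{ij}}\big|.$$
   Context: A partition is a finite weakly decreasing sequence $\lambda=(\lambda_1\ge\dots\ge\lambda_k>0)$ of positive integers (the empty partition is allowed). Its Ferrers diagram $\Phi_\lambda$ is the set of cells $(i,j)$ with $1\le i\le k$, $1\le j\le\lambda_i$ (row $i$, column $j$). Partitions are ordered by $(a_1,\dots,a_h)\le(b_1,\dots,b_m)$ iff $h\le m$ and $a_i\le b_i$ for all $i\le h$ (equivalently, containment of diagrams). $\mathcal{Y}_\lambda$ is the set of all partitions $\alpha\le\lambda$ (including the empty partition) with this order, so $|\mathcal{Y}_\emptyset|=1$. For a cell $(i,j)\in\Phi_\lambda$: $\lambda^{\nearrow}_{ij}$ is the partition whose parts are $\lambda_1-j,\lambda_2-j,\dots,\lambda_{i-1}-j$ with zero parts removed (the cells of $\Phi_\lambda$ in rows $1,\dots,i-1$ and columns $>j$); $\lambda^{\swarrow}_{ij}$ is the partition whose parts are $\min(\lambda_{i+1},j-1),\dots,\min(\lambda_k,j-1)$ with zero parts removed (the cells of $\Phi_\lambda$ in rows $>i$ and columns $1,\dots,j-1$). $\ell(P)$ is the number of edges (covering pairs) of the Hasse diagram of a finite poset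 $P$. *)

theory Defs
  imports Main
begin

text \<open>Partitions are represented as lists of naturals, weakly decreasing, all entries positive.
  Rows/columns are 1-indexed as in the paper; the list entry xs ! (i-1) is lambda_i.\<close>

definition is_partition :: "nat list \<Rightarrow> bool" where
  "is_partition xs \<longleftrightarrow> sorted_wrt (\<ge>) xs \<and> (\<forall>x\<in>set xs. 0 < x)"

definition part_le :: "nat list \<Rightarrow> nat list \<Rightarrow> bool" where
  "part_le a b \<longleftrightarrow> length a \<le> length b \<and> (\<forall>i<length a. a ! i \<le> b ! i)"

definition Y :: "nat list \<Rightarrow> nat list set" where
  "Y lam = {a. is_partition a \<and> part_le a lam}"

definition hasse_edges :: "'a set \<Rightarrow> ('a \<Rightarrow> 'a \<Rightarrow> bool) \<Rightarrow> nat" where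
  "hasse_edges P le = card {(a, b). a \<in> P \<and> b \<in> P \<and> le a b \<and> a \<noteq> b \<and>
      \<not> (\<exists>c\<in>P. le a c \<and> le c b \<and> c \<noteq> a \<and> c \<noteq> b)}"

definition ferrers :: "nat list \<Rightarrow> (nat \<times> nat) set" where
  "ferrers lam = {(i, j). 1 \<le> i \<and> i \<le> length lam \<and> 1 \<le> j \<and> j \<le> lam ! (i - 1)}"

definition ne_part :: "nat list \<Rightarrow> nat \<Rightarrow> nat \<Rightarrow> nat list" where
  "ne_part lam i j = filter (\<lambda>x. 0 < x) (map (\<lambda>x. x - j) (take (i - 1) lam))"

definition sw_part :: "nat list \<Rightarrow> nat \<Rightarrow> nat \<Rightarrow> nat list" where
  "sw_part lam i j = filter (\<lambda>x. 0 < x) (map (\<lambda>x. min x (j - 1)) (drop i lam))"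

end

theory Submission
  imports Defs
begin


definition fn :: "nat list \<Rightarrow> nat \<Rightarrow> nat" where
  "fn a r = (if r < length a then a ! r else 0)"

definition dec :: "(nat \<Rightarrow> nat) \<Rightarrow> bool" where
  "dec g \<longleftrightarrow> (\<forall>x y. x \<le> y \<longrightarrow> g y \<le> g x)"

definition V :: "(nat \<Rightarrow> nat) \<Rightarrow> (nat \<Rightarrow> nat) set" where
  "V B = {g. dec g \<and> (\<forall>r. g r \<le> B r)}"

lemma part_le_fn:
  assumes "\<forall>x\<in>set a. 0 < x"
  shows "part_le a b \<longleftrightarrow> (\<forall>r. fn a r \<le> fn b r)"
proof
  assume "part_le a b" thus "\<forall>r. fn a r \<le> fn b r"
    unfolding part_le_def fn_def by auto
next
  assume h: "\<forall>r. fn a r \<le> fn b r"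
  have "length a \<le> length b"
  proof (rule ccontr)
    assume "\<not> ?thesis"
    hence "length b < length a" by simp
    with h[rule_format, of "length b"] assms nth_mem[of "length b" a] show False
      unfolding fn_def by auto
  qed
  moreover have "\<forall>i<length a. a ! i \<le> b ! i"
  proof (intro allI impI)
    fix i assume i: "i < length a"
    with calculation have "i < length b" by simp
    with h[rule_format, of i] i show "a ! i \<le> b ! i" unfolding fn_def by simp
  qed
  ultimately show "part_le a b" unfolding part_le_def by simp
qed

lemma dec_fn: assumes "is_partition a" shows "dec (fn a)"
  unfolding dec_def
proof (intro allI impI)
  fix x y :: nat assume xy: "x \<le> y"
  have s: "\<forall>i j. i < j \<longrightarrow> j < length a \<longrightarrow> a ! j \<le> a ! i"
    using assms unfolding is_partition_def sorted_wrt_iff_nth_less by simp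
  show "fn a y \<le> fn a x"
  proof (cases "y < length a")
    case True
    hence "x < length a" using xy by simp
    show ?thesis
    proof (cases "x = y")
      case False
      hence "x < y" using xy by simp
      thus ?thesis using s True \<open>x < length a\<close> unfolding fn_def by simp
    qed simp
  qed (simp add: fn_def)
qed

lemma fn_inj: "inj_on fn {a. \<forall>x\<in>set a. 0 < x}"
proof (rule inj_onI)
  fix a b assume a: "a \<in> {a. \<forall>x\<in>set a. 0 < x}" and b: "b \<in> {a. \<forall>x\<in>set a. 0 < x}"
    and e: "fn a = fn b"
  have "length a = length b"
  proof (rule ccontr)
    assume "length a \<noteq> length b"
    hence "length a < length b \<or> length b < length a" by arith
    thus False
    proof
      assume "length a < length b"
      with fun_cong[OF e, of "length a"] b nth_mem[of "length a" b] show False unfolding fn_def by auto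
    next
      assume "length b < length a"
      with fun_cong[OF e, of "length b"] a nth_mem[of "length b" a] show False unfolding fn_def by auto
    qed
  qed
  moreover have "\<forall>i<length a. a ! i = b ! i"
  proof (intro allI impI)
    fix i assume "i < length a"
    thus "a ! i = b ! i" using fun_cong[OF e, of i] calculation unfolding fn_def by simp
  qed
  ultimately show "a = b" by (simp add: nth_equalityI)
qed

lemma bij_Y: "bij_betw fn (Y mu) (V (fn mu))"
proof -
  have sub: "Y mu \<subseteq> {a. \<forall>x\<in>set a. 0 < x}" unfolding Y_def is_partition_def by auto
  have inj: "inj_on fn (Y mu)" using inj_on_subset[OF fn_inj sub] .
  have img1: "fn ` Y mu \<subseteq> V (fn mu)"
  proof
    fix g assume "g \<in> fn ` Y mu"
    then obtain a where a: "a \<in> Y mu" "g = fn a" by auto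
    hence ip: "is_partition a" and pl: "part_le a mu" unfolding Y_def by auto
    have pos: "\<forall>x\<in>set a. 0 < x" using ip unfolding is_partition_def by simp
    have "\<forall>r. fn a r \<le> fn mu r" using part_le_fn[OF pos] pl by simp
    thus "g \<in> V (fn mu)" unfolding V_def using dec_fn[OF ip] a(2) by simp
  qed
  have img2: "V (fn mu) \<subseteq> fn ` Y mu"
  proof
    fix g assume g: "g \<in> V (fn mu)"
    hence d: "dec g" and bd: "\<And>r. g r \<le> fn mu r" unfolding V_def by auto
    have z: "g (length mu) = 0" using bd[of "length mu"] unfolding fn_def by simp
    define m where "m = (LEAST r. g r = 0)"
    have gm: "g m = 0" unfolding m_def by (rule LeastI[of _ "length mu"]) (rule z)
    have ml: "m \<le> length mu" unfolding m_def by (rule Least_le) (rule z)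
    have pos: "0 < g r" if "r < m" for r
    proof -
      have "\<not> g r = 0" using not_less_Least[of r "\<lambda>r. g r = 0"] that unfolding m_def by simp
      thus ?thesis by simp
    qed
    have zero: "g r = 0" if "m \<le> r" for r
    proof -
      have "g r \<le> g m" using d that unfolding dec_def by simp
      thus ?thesis using gm by simp
    qed
    define a where "a = map g [0..<m]"
    have "fn a = g"
    proof
      fix r show "fn a r = g r"
        using zero[of r] unfolding a_def fn_def by (cases "r < m") simp_all
    qed
    moreover have "a \<in> Y mu"
    proof -
      have "sorted_wrt (\<ge>) a" unfolding sorted_wrt_iff_nth_less
      proof (intro allI impI)
        fix i j assume "i < j" "j < length a"
        thus "a ! j \<le> a ! i" using d unfolding a_def dec_def by simp
      qed
      moreover have "\<forall>x\<in>set a. 0 < x" unfolding a_def using pos by auto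
      ultimately have "is_partition a" unfolding is_partition_def by simp
      moreover have "part_le a mu" unfolding part_le_def
      proof
        show "length a \<le> length mu" unfolding a_def using ml by simp
        show "\<forall>i<length a. a ! i \<le> mu ! i"
        proof (intro allI impI)
          fix i assume i: "i < length a"
          hence "i < length mu" unfolding a_def using ml by simp
          thus "a ! i \<le> mu ! i" using bd[of i] i unfolding a_def fn_def by simp
        qed
      qed
      ultimately show ?thesis unfolding Y_def by simp
    qed
    ultimately show "g \<in> fn ` Y mu" by blast
  qed
  show ?thesis unfolding bij_betw_def using inj img1 img2 by blast
qed

lemma finite_Y: "finite (Y mu)"
proof -
  have "Y mu \<subseteq> {xs. set xs \<subseteq> {..sum_list mu} \<and> length xs \<le> length mu}"
  proof
    fix a assume "a \<in> Y mu"
    hence p: "part_le a mu" unfolding Y_def by auto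
    have "\<forall>x\<in>set a. x \<le> sum_list mu"
    proof
      fix x assume "x \<in> set a"
      then obtain i where i: "i < length a" "x = a ! i" by (auto simp: in_set_conv_nth)
      hence "x \<le> mu ! i" "i < length mu" using p unfolding part_le_def by auto
      thus "x \<le> sum_list mu" using elem_le_sum_list[of i mu] by linarith
    qed
    thus "a \<in> {xs. set xs \<subseteq> {..sum_list mu} \<and> length xs \<le> length mu}"
      using p unfolding part_le_def by auto
  qed
  moreover have "finite {xs. set xs \<subseteq> {..sum_list mu} \<and> length xs \<le> length mu}"
    by (rule finite_lists_length_le) simp
  ultimately show ?thesis by (rule finite_subset)
qed

lemma fn_Nil[simp]: "fn [] r = 0" by (simp add: fn_def)

lemma fn_Cons: "fn (y#ys) r = (case r of 0 \<Rightarrow> y | Suc r' \<Rightarrow> fn ys r')"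
  by (cases r) (auto simp: fn_def)

lemma fn_zero: "\<forall>x\<in>set ys. x = 0 \<Longrightarrow> fn ys r = 0"
  by (induction ys arbitrary: r) (auto simp: fn_Cons split: nat.splits)

lemma fn_filter: "sorted_wrt (\<ge>) ys \<Longrightarrow> fn (filter (\<lambda>x. 0 < x) ys) = fn ys"
proof (induction ys)
  case Nil thus ?case by simp
next
  case (Cons y ys)
  show ?case
  proof (cases "0 < y")
    case True
    have "fn (filter (\<lambda>x. 0 < x) ys) = fn ys" using Cons by simp
    hence "fn (filter (\<lambda>x. 0 < x) ys) r = fn ys r" for r by simp
    hence "fn (y # filter (\<lambda>x. 0 < x) ys) r = fn (y # ys) r" for r 
      by (cases r) (simp_all only: fn_Cons nat.case)
    thus ?thesis using True by (simp add: fun_eq_iff)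
  next
    case False
    hence z: "\<forall>x\<in>set (y#ys). x = 0" using Cons.prems by auto
    hence "filter (\<lambda>x. 0 < x) (y # ys) = []" by (simp add: filter_empty_conv)
    thus ?thesis using fn_zero[OF z] by (simp add: fun_eq_iff)
  qed
qed



lemma hasse_transfer:
  assumes bij: "bij_betw f A B" and ord: "\<And>a b. a \<in> A \<Longrightarrow> b \<in> A \<Longrightarrow> le a b \<longleftrightarrow> le' (f a) (f b)"
  shows "hasse_edges A le = hasse_edges B le'"
proof -
  let ?EA = "{(a, b). a \<in> A \<and> b \<in> A \<and> le a b \<and> a \<noteq> b \<and>
      \<not> (\<exists>c\<in>A. le a c \<and> le c b \<and> c \<noteq> a \<and> c \<noteq> b)}"
  let ?EB = "{(a, b). a \<in> B \<and> b \<in> B \<and> le' a b \<and> a \<noteq> b \<and>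
      \<not> (\<exists>c\<in>B. le' a c \<and> le' c b \<and> c \<noteq> a \<and> c \<noteq> b)}"
  have inj: "inj_on f A" and img: "f ` A = B" using bij unfolding bij_betw_def by auto
  have injp: "inj_on (map_prod f f) ?EA"
    using inj unfolding inj_on_def by auto
  have "map_prod f f ` ?EA = ?EB"
  proof
    show "map_prod f f ` ?EA \<subseteq> ?EB"
    proof
      fix p assume "p \<in> map_prod f f ` ?EA"
      then obtain a b where ab: "(a,b) \<in> ?EA" "p = (f a, f b)" by auto
      have "\<not> (\<exists>c\<in>B. le' (f a) c \<and> le' c (f b) \<and> c \<noteq> f a \<and> c \<noteq> f b)"
      proof
        assume "\<exists>c\<in>B. le' (f a) c \<and> le' c (f b) \<and> c \<noteq> f a \<and> c \<noteq> f b"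
        then obtain c where "c \<in> A" "le' (f a) (f c) \<and> le' (f c) (f b) \<and> f c \<noteq> f a \<and> f c \<noteq> f b"
          using img by auto
        thus False using ab ord by auto
      qed
      thus "p \<in> ?EB" using ab ord img inj by (auto simp: inj_on_eq_iff)
    qed
  next
    show "?EB \<subseteq> map_prod f f ` ?EA"
    proof
      fix p assume p: "p \<in> ?EB"
      then obtain x y where xy: "p = (x, y)" "x \<in> B" "y \<in> B" by auto
      then obtain a b where ab: "a \<in> A" "b \<in> A" "x = f a" "y = f b" using img by blast
      have "(a, b) \<in> ?EA"
      proof -
        have "\<not> (\<exists>c\<in>A. le a c \<and> le c b \<and> c \<noteq> a \<and> c \<noteq> b)"
        proof
          assume "\<exists>c\<in>A. le a c \<and> le c b \<and> c \<noteq> a \<and> c \<noteq> b"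
          then obtain c where c: "c \<in> A" "le a c" "le c b" "c \<noteq> a" "c \<noteq> b" by auto
          hence "f c \<in> B" "le' x (f c)" "le' (f c) y" "f c \<noteq> x" "f c \<noteq> y"
            using ab ord img inj by (auto simp: inj_on_eq_iff)
          thus False using p xy by auto
        qed
        thus ?thesis using p xy ab ord by auto
      qed
      thus "p \<in> map_prod f f ` ?EA" using xy ab by force
    qed
  qed
  hence "card ?EB = card ?EA" using card_image[OF injp] by simp
  thus ?thesis unfolding hasse_edges_def by simp
qed



lemma fn_map: "fn (map f xs) r = (if r < length xs then f (xs ! r) else 0)"
  by (simp add: fn_def)

lemma fn_sw:
  assumes "is_partition lam"
  shows "fn (sw_part lam i j) r = min (fn lam (i + r)) (j - 1)"
proof -
  have s: "sorted_wrt (\<ge>) lam" using assms unfolding is_partition_def by simp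
  have "sorted_wrt (\<ge>) (map (\<lambda>x. min x (j - 1)) (drop i lam))"
    by (rule sorted_wrt_map_mono[OF sorted_wrt_drop[OF s]]) simp
  hence "fn (sw_part lam i j) = fn (map (\<lambda>x. min x (j - 1)) (drop i lam))"
    unfolding sw_part_def by (rule fn_filter)
  thus ?thesis by (simp add: fn_map fn_def)
qed

lemma fn_ne:
  assumes "is_partition lam"
  shows "fn (ne_part lam i j) r = (if r < i - 1 then fn lam r - j else 0)"
proof -
  have s: "sorted_wrt (\<ge>) lam" using assms unfolding is_partition_def by simp
  have "sorted_wrt (\<ge>) (map (\<lambda>x. x - j) (take (i - 1) lam))"
    by (rule sorted_wrt_map_mono[OF sorted_wrt_take[OF s]]) simp
  hence "fn (ne_part lam i j) = fn (map (\<lambda>x. x - j) (take (i - 1) lam))"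
    unfolding ne_part_def by (rule fn_filter)
  thus ?thesis by (simp add: fn_map fn_def)
qed

lemma cover_iff:
  assumes g: "g \<in> V B" and g': "g' \<in> V B"
  shows "(g \<le> g' \<and> g \<noteq> g' \<and> \<not> (\<exists>c\<in>V B. g \<le> c \<and> c \<le> g' \<and> c \<noteq> g \<and> c \<noteq> g'))
     \<longleftrightarrow> (\<exists>r. g' = g(r := Suc (g r)))"
proof
  assume h: "g \<le> g' \<and> g \<noteq> g' \<and> \<not> (\<exists>c\<in>V B. g \<le> c \<and> c \<le> g' \<and> c \<noteq> g \<and> c \<noteq> g')"
  hence le: "\<And>r. g r \<le> g' r" by (simp add: le_fun_def)
  have "\<exists>r. g r < g' r"
  proof (rule ccontr)
    assume "\<not> ?thesis"
    hence "\<And>r. g r = g' r" using le by (metis le_neq_implies_less)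
    thus False using h by (simp add: fun_eq_iff)
  qed
  define r where "r = (LEAST r. g r < g' r)"
  have gr: "g r < g' r" unfolding r_def using \<open>\<exists>r. g r < g' r\<close> by (rule LeastI_ex)
  have before: "g s = g' s" if "s < r" for s
  proof -
    have "\<not> g s < g' s" using not_less_Least[of s "\<lambda>r. g r < g' r"] that unfolding r_def by simp
    thus ?thesis using le[of s] by simp
  qed
  define c where "c = g(r := Suc (g r))"
  have dg: "dec g" and bg: "\<And>x. g x \<le> B x" using g unfolding V_def by auto
  have dg': "dec g'" and bg': "\<And>x. g' x \<le> B x" using g' unfolding V_def by auto
  have "dec c" unfolding dec_def
  proof (intro allI impI)
    fix x y :: nat assume xy: "x \<le> y"
    show "c y \<le> c x"
    proof (cases "y = r")
      case True
      show ?thesis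
      proof (cases "x = r")
        case False
        hence "x < r" using xy True by simp
        hence "c x = g' x" using before[of x] unfolding c_def by simp
        moreover have "g' r \<le> g' x" using dg' \<open>x < r\<close> unfolding dec_def by simp
        ultimately show ?thesis using gr True unfolding c_def by simp
      qed (simp add: True)
    next
      case False
      hence cy: "c y = g y" unfolding c_def by simp
      have "g y \<le> g x" using dg xy unfolding dec_def by simp
      moreover have "g x \<le> c x" unfolding c_def by simp
      ultimately show ?thesis using cy by simp
    qed
  qed
  moreover have "\<forall>x. c x \<le> B x"
  proof
    fix x show "c x \<le> B x"
      using bg[of x] bg'[of r] gr unfolding c_def by (cases "x = r") simp_all
  qed
  ultimately have cV: "c \<in> V B" unfolding V_def by simp
  have "g \<le> c" unfolding c_def le_fun_def by simp
  moreover have "c \<le> g'" unfolding c_def le_fun_def using le gr by (simp add: Suc_leI)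
  moreover have "c \<noteq> g" unfolding c_def by (metis fun_upd_same n_not_Suc_n)
  ultimately have "c = g'" using h cV by blast
  thus "\<exists>r. g' = g(r := Suc (g r))" unfolding c_def by metis
next
  assume "\<exists>r. g' = g(r := Suc (g r))"
  then obtain r where r: "g' = g(r := Suc (g r))" by blast
  have "g \<le> g'" unfolding r le_fun_def by simp
  moreover have "g \<noteq> g'" unfolding r by (metis fun_upd_same n_not_Suc_n)
  moreover have "\<not> (\<exists>c\<in>V B. g \<le> c \<and> c \<le> g' \<and> c \<noteq> g \<and> c \<noteq> g')"
  proof
    assume "\<exists>c\<in>V B. g \<le> c \<and> c \<le> g' \<and> c \<noteq> g \<and> c \<noteq> g'"
    then obtain c where c: "g \<le> c" "c \<le> g'" "c \<noteq> g" "c \<noteq> g'" by blast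
    have off: "c x = g x" if "x \<noteq> r" for x
      using c(1,2) that unfolding r le_fun_def by (metis fun_upd_other order_antisym)
    have "c r = g r \<or> c r = Suc (g r)"
      using c(1,2) unfolding r le_fun_def by (metis fun_upd_same le_SucE order_antisym)
    thus False
    proof
      assume "c r = g r" hence "c = g" using off by (metis ext)
      thus False using c by simp
    next
      assume "c r = Suc (g r)" hence "c = g'" using off unfolding r by (simp add: fun_eq_iff)
      thus False using c by simp
    qed
  qed
  ultimately show "g \<le> g' \<and> g \<noteq> g' \<and> \<not> (\<exists>c\<in>V B. g \<le> c \<and> c \<le> g' \<and> c \<noteq> g \<and> c \<noteq> g')"
    by blast
qed



lemma C_char:
  assumes dL: "dec L" and j1: "1 \<le> j" and jL: "j \<le> L p"
  shows "{g \<in> V L. g p = j - 1 \<and> g(p := j) \<in> V L}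
       = {g. dec g \<and> (\<forall>r. g r \<le> L r) \<and> g p = j - 1 \<and> (\<forall>r<p. j \<le> g r)}"
proof (intro set_eqI iffI)
  fix g assume "g \<in> {g \<in> V L. g p = j - 1 \<and> g(p := j) \<in> V L}"
  hence g: "dec g" "\<forall>r. g r \<le> L r" "g p = j - 1" "dec (g(p := j))" unfolding V_def by auto
  have "\<forall>r<p. j \<le> g r"
  proof (intro allI impI)
    fix r assume "r < p"
    hence "(g(p := j)) p \<le> (g(p := j)) r" using g(4)[unfolded dec_def, rule_format, of r p] by simp
    thus "j \<le> g r" using \<open>r < p\<close> by simp
  qed
  thus "g \<in> {g. dec g \<and> (\<forall>r. g r \<le> L r) \<and> g p = j - 1 \<and> (\<forall>r<p. j \<le> g r)}" using g by simp
next
  fix g assume "g \<in> {g. dec g \<and> (\<forall>r. g r \<le> L r) \<and> g p = j - 1 \<and> (\<forall>r<p. j \<le> g r)}"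
  hence g: "dec g" "\<forall>r. g r \<le> L r" "g p = j - 1" "\<forall>r<p. j \<le> g r" by auto
  have "dec (g(p := j))" unfolding dec_def
  proof (intro allI impI)
    fix x y :: nat assume xy: "x \<le> y"
    have gxy: "g y \<le> g x" using g(1) xy unfolding dec_def by simp
    show "(g(p := j)) y \<le> (g(p := j)) x"
    proof (cases "y = p")
      case True
      thus ?thesis using g(4) xy by (cases "x = p") simp_all
    next
      case False
      thus ?thesis using gxy g(3) xy by (cases "x = p") auto
    qed
  qed
  moreover have "\<forall>r. (g(p := j)) r \<le> L r" using g(2) jL by simp
  ultimately show "g \<in> {g \<in> V L. g p = j - 1 \<and> g(p := j) \<in> V L}" using g unfolding V_def by simp
qed

lemma fiber:
  assumes dL: "dec L" and j1: "1 \<le> j" and jL: "j \<le> L p"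
  shows "bij_betw (\<lambda>g. (\<lambda>r. g (Suc p + r), \<lambda>r. if r < p then g r - j else 0))
     {g \<in> V L. g p = j - 1 \<and> g(p := j) \<in> V L}
     (V (\<lambda>r. min (L (Suc p + r)) (j - 1)) \<times> V (\<lambda>r. if r < p then L r - j else 0))"
proof (rule bij_betw_byWitness[where f' = "\<lambda>(s, t) r. if r < p then t r + j else if r = p then j - 1 else s (r - Suc p)"])
  let ?A = "{g. dec g \<and> (\<forall>r. g r \<le> L r) \<and> g p = j - 1 \<and> (\<forall>r<p. j \<le> g r)}"
  note CC = C_char[OF assms]
  show "\<forall>g \<in> {g \<in> V L. g p = j - 1 \<and> g(p := j) \<in> V L}.
      (\<lambda>(s, t) r. if r < p then t r + j else if r = p then j - 1 else s (r - Suc p))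
        ((\<lambda>r. g (Suc p + r), \<lambda>r. if r < p then g r - j else 0)) = g"
  proof
    fix g assume "g \<in> {g \<in> V L. g p = j - 1 \<and> g(p := j) \<in> V L}"
    hence g: "g p = j - 1" "\<forall>r<p. j \<le> g r" unfolding CC by auto
    show "(\<lambda>(s, t) r. if r < p then t r + j else if r = p then j - 1 else s (r - Suc p))
        ((\<lambda>r. g (Suc p + r), \<lambda>r. if r < p then g r - j else 0)) = g"
    proof
      fix r show "(case ((\<lambda>r. g (Suc p + r)), (\<lambda>r. if r < p then g r - j else 0)) of (s, t) \<Rightarrow> (\<lambda>r. if r < p then t r + j else if r = p then j - 1 else s (r - Suc p))) r = g r"
        using g by (cases "r < p"; cases "r = p") auto
    qed
  qed
  show "\<forall>st \<in> V (\<lambda>r. min (L (Suc p + r)) (j - 1)) \<times> V (\<lambda>r. if r < p then L r - j else 0).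
      (\<lambda>g. (\<lambda>r. g (Suc p + r), \<lambda>r. if r < p then g r - j else 0))
        ((\<lambda>(s, t) r. if r < p then t r + j else if r = p then j - 1 else s (r - Suc p)) st) = st"
  proof
    fix st assume st: "st \<in> V (\<lambda>r. min (L (Suc p + r)) (j - 1)) \<times> V (\<lambda>r. if r < p then L r - j else 0)"
    obtain s t where stv: "st = (s, t)" by (cases st)
    have btt: "\<forall>r. t r \<le> (if r < p then L r - j else 0)" using st unfolding stv V_def by auto
    have t0: "\<forall>r. \<not> r < p \<longrightarrow> t r = 0"
    proof (intro allI impI)
      fix r assume "\<not> r < p" thus "t r = 0" using btt[rule_format, of r] by simp
    qed
    have e1: "(\<lambda>r. (if Suc p + r < p then t (Suc p + r) + j else if Suc p + r = p then j - 1 else s (Suc p + r - Suc p))) = s"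
      by (simp add: fun_eq_iff)
    have e2: "(\<lambda>r. if r < p then (if r < p then t r + j else if r = p then j - 1 else s (r - Suc p)) - j else 0) = t"
      using t0 by (auto simp: fun_eq_iff)
    show "(\<lambda>g. (\<lambda>r. g (Suc p + r), \<lambda>r. if r < p then g r - j else 0))
        ((\<lambda>(s, t) r. if r < p then t r + j else if r = p then j - 1 else s (r - Suc p)) st) = st"
      unfolding stv using t0 by (auto simp: fun_eq_iff)
  qed
  show "(\<lambda>g. (\<lambda>r. g (Suc p + r), \<lambda>r. if r < p then g r - j else 0)) ` {g \<in> V L. g p = j - 1 \<and> g(p := j) \<in> V L}
      \<subseteq> V (\<lambda>r. min (L (Suc p + r)) (j - 1)) \<times> V (\<lambda>r. if r < p then L r - j else 0)"
  proof
    fix x assume "x \<in> (\<lambda>g. (\<lambda>r. g (Suc p + r), \<lambda>r. if r < p then g r - j else 0)) ` {g \<in> V L. g p = j - 1 \<and> g(p := j) \<in> V L}"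
    then obtain g where x: "x = (\<lambda>r. g (Suc p + r), \<lambda>r. if r < p then g r - j else 0)"
      and "g \<in> ?A" unfolding CC by blast
    hence g: "dec g" "\<forall>r. g r \<le> L r" "g p = j - 1" "\<forall>r<p. j \<le> g r" by auto
    have "dec (\<lambda>r. g (Suc p + r))" using g(1) unfolding dec_def by simp
    moreover have "\<forall>r. g (Suc p + r) \<le> min (L (Suc p + r)) (j - 1)"
    proof
      fix r have "g (Suc p + r) \<le> g p" using g(1) unfolding dec_def by simp
      thus "g (Suc p + r) \<le> min (L (Suc p + r)) (j - 1)" using g(2,3) by simp
    qed
    moreover have "dec (\<lambda>r. if r < p then g r - j else 0)" unfolding dec_def
    proof (intro allI impI)
      fix a b :: nat assume "a \<le> b"
      thus "(if b < p then g b - j else 0) \<le> (if a < p then g a - j else 0)"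
        using g(1) unfolding dec_def by (cases "b < p") (auto intro: diff_le_mono)
    qed
    moreover have "\<forall>r. (if r < p then g r - j else 0) \<le> (if r < p then L r - j else 0)"
      using g(2) by (auto intro: diff_le_mono)
    ultimately show "x \<in> V (\<lambda>r. min (L (Suc p + r)) (j - 1)) \<times> V (\<lambda>r. if r < p then L r - j else 0)"
      unfolding x V_def by simp
  qed
  show "(\<lambda>(s, t) r. if r < p then t r + j else if r = p then j - 1 else s (r - Suc p)) `
      (V (\<lambda>r. min (L (Suc p + r)) (j - 1)) \<times> V (\<lambda>r. if r < p then L r - j else 0))
      \<subseteq> {g \<in> V L. g p = j - 1 \<and> g(p := j) \<in> V L}"
  proof
    fix g assume "g \<in> (\<lambda>(s, t) r. if r < p then t r + j else if r = p then j - 1 else s (r - Suc p)) `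
      (V (\<lambda>r. min (L (Suc p + r)) (j - 1)) \<times> V (\<lambda>r. if r < p then L r - j else 0))"
    then obtain s t where gd: "g = (\<lambda>r. if r < p then t r + j else if r = p then j - 1 else s (r - Suc p))"
      and s: "s \<in> V (\<lambda>r. min (L (Suc p + r)) (j - 1))" and t: "t \<in> V (\<lambda>r. if r < p then L r - j else 0)"
      by auto
    have ds: "dec s" and bs: "\<And>r. s r \<le> min (L (Suc p + r)) (j - 1)" using s unfolding V_def by auto
    have dt: "dec t" and bt: "\<And>r. t r \<le> (if r < p then L r - j else 0)" using t unfolding V_def by auto
    have Lj: "j \<le> L r" if "r \<le> p" for r using dL that jL unfolding dec_def by (meson le_trans)
    have "dec g" unfolding dec_def
    proof (intro allI impI)
      fix x y :: nat assume xy: "x \<le> y"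
      show "g y \<le> g x"
      proof (cases "y < p")
        case True
        hence "x < p" using xy by simp
        thus ?thesis using True dt xy unfolding gd dec_def by simp
      next
        case yp: False
        show ?thesis
        proof (cases "y = p")
          case True
          thus ?thesis unfolding gd using xy by (cases "x < p") auto
        next
          case False
          hence y: "p < y" using yp by simp
          have sy: "s (y - Suc p) \<le> j - 1" using bs[of "y - Suc p"] by simp
          show ?thesis
          proof (cases "x \<le> p")
            case True
            thus ?thesis unfolding gd using y sy by auto
          next
            case False
            hence "x - Suc p \<le> y - Suc p" using xy by simp
            hence "s (y - Suc p) \<le> s (x - Suc p)" using ds unfolding dec_def by simp
            thus ?thesis unfolding gd using y False by simp
          qed
        qed
      qed
    qed
    moreover have "\<forall>r. g r \<le> L r"
    proof
      fix r show "g r \<le> L r"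
      proof (cases "r < p")
        case True
        thus ?thesis using bt[of r] Lj[of r] unfolding gd by simp
      next
        case False
        show ?thesis
        proof (cases "r = p")
          case True thus ?thesis unfolding gd using jL by simp
        next
          case rp: False
          hence "Suc p + (r - Suc p) = r" using False by simp
          thus ?thesis using bs[of "r - Suc p"] False rp unfolding gd by simp
        qed
      qed
    qed
    moreover have "g p = j - 1" unfolding gd by simp
    moreover have "\<forall>r<p. j \<le> g r" unfolding gd by simp
    ultimately show "g \<in> {g \<in> V L. g p = j - 1 \<and> g(p := j) \<in> V L}" unfolding CC by simp
  qed
qed



theorem mainTheorem18:
  fixes lam :: "nat list"
  assumes "is_partition lam"
  shows "hasse_edges (Y lam) part_le
           = (\<Sum>(i, j)\<in>ferrers lam. card (Y (sw_part lam i j)) * card (Y (ne_part lam i j)))"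
proof -
  define L where "L = fn lam"
  have dL: "dec L" unfolding L_def using dec_fn[OF assms] .
  have bij: "bij_betw fn (Y lam) (V L)" unfolding L_def by (rule bij_Y)
  have step1: "hasse_edges (Y lam) part_le = hasse_edges (V L) (\<le>)"
  proof (rule hasse_transfer[OF bij])
    fix a b assume "a \<in> Y lam" "b \<in> Y lam"
    hence "\<forall>x\<in>set a. 0 < x" unfolding Y_def is_partition_def by simp
    thus "part_le a b \<longleftrightarrow> fn a \<le> fn b" using part_le_fn by (simp add: le_fun_def)
  qed
  define EV where "EV = {(a, b). a \<in> V L \<and> b \<in> V L \<and> a \<le> b \<and> a \<noteq> b \<and>
      \<not> (\<exists>c\<in>V L. a \<le> c \<and> c \<le> b \<and> c \<noteq> a \<and> c \<noteq> b)}"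
  have step2: "hasse_edges (V L) (\<le>) = card EV" unfolding EV_def hasse_edges_def by simp
  define Cf where "Cf = (\<lambda>(i::nat, j::nat). {g \<in> V L. g (i - 1) = j - 1 \<and> g(i - 1 := j) \<in> V L})"
  define G where "G = (\<lambda>(i::nat, j::nat). (\<lambda>g. (g, g(i - 1 := j))) ` Cf (i, j))"
  have finV: "finite (V L)" using bij finite_Y[of lam] bij_betw_finite by blast
  have finF: "finite (ferrers lam)"
  proof (rule finite_subset)
    show "ferrers lam \<subseteq> {1..length lam} \<times> {1..sum_list lam}"
    proof
      fix c assume "c \<in> ferrers lam"
      then obtain i j where c: "c = (i, j)" "1 \<le> i" "i \<le> length lam" "1 \<le> j" "j \<le> lam ! (i - 1)"
        unfolding ferrers_def by auto
      have "lam ! (i - 1) \<le> sum_list lam" using elem_le_sum_list[of "i - 1" lam] c by simp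
      thus "c \<in> {1..length lam} \<times> {1..sum_list lam}" using c by simp
    qed
  qed simp
  have cellL: "1 \<le> j \<and> j \<le> L (i - 1)" if "(i, j) \<in> ferrers lam" for i j
    using that unfolding ferrers_def L_def fn_def by auto
  have EVU: "EV = \<Union> (G ` ferrers lam)"
  proof
    show "EV \<subseteq> \<Union> (G ` ferrers lam)"
    proof
      fix x assume "x \<in> EV"
      then obtain a b where x: "x = (a, b)" and ab: "a \<in> V L" "b \<in> V L"
        and cov: "a \<le> b \<and> a \<noteq> b \<and> \<not> (\<exists>c\<in>V L. a \<le> c \<and> c \<le> b \<and> c \<noteq> a \<and> c \<noteq> b)"
        unfolding EV_def by auto
      then obtain r where b: "b = a(r := Suc (a r))" using cover_iff[OF ab] by blast
      have "b r \<le> L r" using ab(2) unfolding V_def by auto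
      hence bl: "Suc (a r) \<le> L r" unfolding b by simp
      hence "r < length lam" unfolding L_def fn_def by (cases "r < length lam") auto
      hence cell: "(Suc r, Suc (a r)) \<in> ferrers lam"
        using bl unfolding ferrers_def L_def fn_def by simp
      have "a \<in> Cf (Suc r, Suc (a r))" unfolding Cf_def using ab b by simp
      hence "x \<in> G (Suc r, Suc (a r))" unfolding G_def x b by simp
      thus "x \<in> \<Union> (G ` ferrers lam)" using cell by blast
    qed
  next
    show "\<Union> (G ` ferrers lam) \<subseteq> EV"
    proof
      fix x assume "x \<in> \<Union> (G ` ferrers lam)"
      then obtain i j g where ij: "(i, j) \<in> ferrers lam" and g: "g \<in> Cf (i, j)"
        and x: "x = (g, g(i - 1 := j))" unfolding G_def by auto
      have gV: "g \<in> V L" and gi: "g (i - 1) = j - 1" and g'V: "g(i - 1 := j) \<in> V L"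
        using g unfolding Cf_def by auto
      have "j = Suc (g (i - 1))" using gi cellL[OF ij] by simp
      hence "\<exists>r. g(i - 1 := j) = g(r := Suc (g r))" by blast
      hence "g \<le> g(i - 1 := j) \<and> g \<noteq> g(i - 1 := j) \<and>
          \<not> (\<exists>c\<in>V L. g \<le> c \<and> c \<le> g(i - 1 := j) \<and> c \<noteq> g \<and> c \<noteq> g(i - 1 := j))"
        using cover_iff[OF gV g'V] by blast
      thus "x \<in> EV" unfolding EV_def x using gV g'V by simp
    qed
  qed
  have disj: "\<forall>c\<in>ferrers lam. \<forall>d\<in>ferrers lam. c \<noteq> d \<longrightarrow> G c \<inter> G d = {}"
  proof (intro ballI impI)
    fix c d assume c: "c \<in> ferrers lam" and d: "d \<in> ferrers lam" and cd: "c \<noteq> d"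
    obtain i j where cij: "c = (i, j)" by (cases c)
    obtain i' j' where dij: "d = (i', j')" by (cases d)
    have i1: "1 \<le> i" "1 \<le> i'" using c d unfolding cij dij ferrers_def by auto
    show "G c \<inter> G d = {}"
    proof (rule ccontr)
      assume "G c \<inter> G d \<noteq> {}"
      then obtain g g' where gC: "g \<in> Cf (i, j)" and g'C: "g' \<in> Cf (i', j')"
        and e: "(g, g(i - 1 := j)) = (g', g'(i' - 1 := j'))" unfolding G_def cij dij by auto
      have gg: "g = g'" using e by simp
      have gi: "g (i - 1) = j - 1" using gC unfolding Cf_def by simp
      have j1: "1 \<le> j" using cellL c unfolding cij by blast
      have e2: "g(i - 1 := j) = g(i' - 1 := j')" using e gg by simp
      have "i - 1 = i' - 1"
      proof (rule ccontr)
        assume "i - 1 \<noteq> i' - 1"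
        hence "(g(i - 1 := j)) (i - 1) = g (i - 1)" using e2 by (metis fun_upd_other)
        thus False using gi j1 by simp
      qed
      hence "i = i'" using i1 by simp
      moreover have "j = j'" using e2 \<open>i - 1 = i' - 1\<close> by (metis fun_upd_same)
      ultimately show False using cd cij dij by simp
    qed
  qed
  have finG: "\<forall>c\<in>ferrers lam. finite (G c)"
  proof
    fix c assume "c \<in> ferrers lam"
    obtain i j where cij: "c = (i, j)" by (cases c)
    have "Cf (i, j) \<subseteq> V L" unfolding Cf_def by auto
    hence "finite (Cf (i, j))" using finV finite_subset by blast
    thus "finite (G c)" unfolding G_def cij by simp
  qed
  have cardG: "card (G (i, j)) = card (Y (sw_part lam i j)) * card (Y (ne_part lam i j))"
    if ij: "(i, j) \<in> ferrers lam" for i j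
  proof -
    have i1: "1 \<le> i" using ij unfolding ferrers_def by simp
    have "inj_on (\<lambda>g. (g, g(i - 1 := j))) (Cf (i, j))" by (rule inj_onI) simp
    hence "card (G (i, j)) = card (Cf (i, j))" unfolding G_def by (simp add: card_image)
    also have "\<dots> = card (V (\<lambda>r. min (L (Suc (i - 1) + r)) (j - 1)) \<times> V (\<lambda>r. if r < i - 1 then L r - j else 0))"
      unfolding Cf_def using fiber[OF dL, of j "i - 1"] cellL[OF ij] by (simp add: bij_betw_same_card)
    also have "\<dots> = card (V (fn (sw_part lam i j))) * card (V (fn (ne_part lam i j)))"
    proof -
      have "(\<lambda>r. min (L (Suc (i - 1) + r)) (j - 1)) = fn (sw_part lam i j)"
        using i1 unfolding L_def by (simp add: fun_eq_iff fn_sw[OF assms])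
      moreover have "(\<lambda>r. if r < i - 1 then L r - j else 0) = fn (ne_part lam i j)"
        unfolding L_def by (simp add: fun_eq_iff fn_ne[OF assms])
      ultimately show ?thesis by (simp add: card_cartesian_product)
    qed
    also have "\<dots> = card (Y (sw_part lam i j)) * card (Y (ne_part lam i j))"
      using bij_betw_same_card[OF bij_Y] by metis
    finally show ?thesis .
  qed
  have "card EV = (\<Sum>c\<in>ferrers lam. card (G c))"
    unfolding EVU by (rule card_UN_disjoint[OF finF finG disj])
  also have "\<dots> = (\<Sum>(i, j)\<in>ferrers lam. card (Y (sw_part lam i j)) * card (Y (ne_part lam i j)))"
    by (rule sum.cong) (auto simp: cardG)
  finally show ?thesis using step1 step2 by simp
qed

end
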